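(* Let $(\mathcal{R},\mu)$ be resonant, let $\|\cdot\|_X$ be an r.i. quasi-Banach function norm on $\mathcal{M}(\mathcal{R},\mu)$ with corresponding space $X$, and let $\|\cdot\|_{\overline{X}}$ be the r.i. quasi-Banach function norm on $\mathcal{M}([0,\infty),\lambda)$ constructed as in the context, with corresponding space $\overline{X}$. Assume that $L^1\cap L^\infty\hookrightarrow X$ (over $(\mathcal{R},\mu)$) and that there exists $f_0\in\overline{X}$ with $f_0^*(0)=\infty$. Then $L^1\cap L^\infty\subseteq X_a$.
   Context: Let $(\mathcal{R},\mu)$ be a $\sigma$-finite measure space; $\mathcal{M}$ denotes the $\mu$-measurable extended complex-valued functions (identified a.e.), $\mathcal{M}_+$ the non-negative ones. $f_*(s)=\mu(\{|f|>s\})$, $f^*(t)=\inf\{s\ge0;\,f_*(s)\le t\}$ (non-increasing rearrangement). $(\mathcal{R},\mu)$ is called resonant if it is either non-atomic or completely atomic with all atoms of equal measure. A quasi-Banach function norm is a map $\|\cdot\|:\mathcal{M}\to[0,\infty]$ with $\|f\|=\||f|\|$ such that on $\mathcal{M}_+$: (Q1) $\|af\|=|a|\|f\|$, $\|f\|=0\iff f=0$ a.e., and there is $C\ge1$ (modulus of concavity) with $\|f+g\|\le C(\|f\|+\|g\|)$; (P2) $f\le g$ a.e. implies $\|f\|\le\|g\|$; (P3) $f_n\uparrow f$ a.e. implies $\|f_n\|\uparrow\|f\|$; (P4) $\|\chi_E\|<\infty$ whenever $\mu(E)<\infty$. The norm is rearrangement-invariant (r.i.) if $\|f\|=\|g\|$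 whenever $f^*=g^*$. The corresponding space is $X=\{f\in\mathcal{M};\,\|f\|_X<\infty\}$. A function $f\in X$ has absolutely continuous quasinorm if $\|f\chi_{E_k}\|_X\to0$ for every sequence of measurable sets $E_k$ with $\chi_{E_k}\to0$ a.e.; $X_a$ denotes the set of such functions. $L^1\cap L^\infty$ is the space with norm $\|f\|_{L^1\cap L^\infty}=f^*(0)+\int_0^\infty f^*\,d\lambda$; $Y\hookrightarrow X$ means $Y\subseteq X$ with continuous inclusion. Construction of $\|\cdot\|_{\overline{X}}$: (i) If $(\mathcal{R},\mu)$ is non-atomic, fix a measure-preserving map $\sigma$ from $(\mathcal{R},\mu)$ onto $[0,\mu(\mathcal{R}))$ (with Lebesgue measure $\lambda$), and for $h\in\mathcal{M}([0,\mu(\mathcal{R})),\lambda)$ put $\|h\|_{\overline{X_0}}=\|h\circ\sigma\|_X$. (ii) If $(\mathcal{R},\mu)$ is completely atomic with all atoms of measure $\beta\in(0,\infty)$, fix an enumeration $(e_n)_{n\in\mathcal{N}}$ of the atoms, $\mathcal{N}=\{n\in\mathbb{N};\,\beta n<\mu(\mathcal{R})\}$ ($0\in\mathbb{N}$), define $T(h)(e_n)=\beta^{-1}\int_{\beta n}^{\beta(n+1)}h^*\,d\lambda$ for $n\in\mathcal{N}$, and put $\|h\|_{\overline{X_0}}=\|T(h)\|_X$. In both cases define, for $f\in\mathcal{M}([0,\infty),\lambda)$, $\|f\|_{\overline{X}}=\|f^*\chi_{[0,\mu(\mathcal{R}))}\|_{\overline{X_0}}$. (This is an r.i. quasi-Banach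 function norm with $\|f\|_X=\|f^*\|_{\overline{X}}$ for $f\in\mathcal{M}(\mathcal{R},\mu)$.) *)

theory Defs
  imports "HOL-Analysis.Analysis"
begin

text \<open>Functions are represented by their absolute values, i.e. as elements of
  M_+ with values in ennreal (the quasinorm satisfies ||f|| = || |f| ||, so it is
  determined by its restriction to non-negative functions).\<close>

definition rearr :: "'a measure \<Rightarrow> ('a \<Rightarrow> ennreal) \<Rightarrow> real \<Rightarrow> ennreal" where
  "rearr M f t = Inf {s::ennreal. emeasure M {x \<in> space M. s < f x} \<le> ennreal t}"

abbreviation halfline :: "real measure" where
  "halfline \<equiv> lebesgue_on {0..}"

definition atom :: "'a measure \<Rightarrow> 'a set \<Rightarrow> bool" where
  "atom M A \<longleftrightarrow> A \<in> sets M \<and> emeasure M A > 0 \<and>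
     (\<forall>B \<in> sets M. B \<subseteq> A \<longrightarrow> emeasure M B = 0 \<or> emeasure M (A - B) = 0)"

definition non_atomic :: "'a measure \<Rightarrow> bool" where
  "non_atomic M \<longleftrightarrow> \<not> (\<exists>A. atom M A)"

definition atom_index :: "'a measure \<Rightarrow> real \<Rightarrow> nat set" where
  "atom_index M \<beta> = {n. ennreal (\<beta> * real n) < emeasure M (space M)}"

definition atom_enum :: "'a measure \<Rightarrow> real \<Rightarrow> (nat \<Rightarrow> 'a set) \<Rightarrow> bool" where
  "atom_enum M \<beta> e \<longleftrightarrow> 0 < \<beta> \<and>
     (\<forall>n \<in> atom_index M \<beta>. atom M (e n) \<and> emeasure M (e n) = ennreal \<beta>) \<and>
     disjoint_family_on e (atom_index M \<beta>) \<and>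
     space M - (\<Union>n \<in> atom_index M \<beta>. e n) \<in> null_sets M"

definition completely_atomic_equal :: "'a measure \<Rightarrow> bool" where
  "completely_atomic_equal M \<longleftrightarrow> (\<exists>\<beta> e. atom_enum M \<beta> e)"

definition resonant :: "'a measure \<Rightarrow> bool" where
  "resonant M \<longleftrightarrow> non_atomic M \<or> completely_atomic_equal M"

definition qBFN :: "'a measure \<Rightarrow> (('a \<Rightarrow> ennreal) \<Rightarrow> ennreal) \<Rightarrow> bool" where
  "qBFN M N \<longleftrightarrow>
     (\<forall>f \<in> borel_measurable M. \<forall>a::real. a \<ge> 0 \<longrightarrow> N (\<lambda>x. ennreal a * f x) = ennreal a * N f) \<and>
     (\<forall>f \<in> borel_measurable M. N f = 0 \<longleftrightarrow> (AE x in M. f x = 0)) \<and>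
     (\<exists>C::real. C \<ge> 1 \<and> (\<forall>f \<in> borel_measurable M. \<forall>g \<in> borel_measurable M.
         N (\<lambda>x. f x + g x) \<le> ennreal C * (N f + N g))) \<and>
     (\<forall>f \<in> borel_measurable M. \<forall>g \<in> borel_measurable M.
         (AE x in M. f x \<le> g x) \<longrightarrow> N f \<le> N g) \<and>
     (\<forall>F f. (\<forall>n. F n \<in> borel_measurable M) \<longrightarrow> f \<in> borel_measurable M \<longrightarrow>
         (AE x in M. incseq (\<lambda>n. F n x) \<and> (\<lambda>n. F n x) \<longlonglongrightarrow> f x) \<longrightarrow>
         (\<lambda>n. N (F n)) \<longlonglongrightarrow> N f) \<and>
     (\<forall>A \<in> sets M. emeasure M A < \<infinity> \<longrightarrow> N (indicator A) < \<infinity>)"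

definition rearrangement_invariant :: "'a measure \<Rightarrow> (('a \<Rightarrow> ennreal) \<Rightarrow> ennreal) \<Rightarrow> bool" where
  "rearrangement_invariant M N \<longleftrightarrow>
     (\<forall>f \<in> borel_measurable M. \<forall>g \<in> borel_measurable M.
        (\<forall>t\<ge>0. rearr M f t = rearr M g t) \<longrightarrow> N f = N g)"

definition ri_qBFN :: "'a measure \<Rightarrow> (('a \<Rightarrow> ennreal) \<Rightarrow> ennreal) \<Rightarrow> bool" where
  "ri_qBFN M N \<longleftrightarrow> qBFN M N \<and> rearrangement_invariant M N"

definition in_space :: "'a measure \<Rightarrow> (('a \<Rightarrow> ennreal) \<Rightarrow> ennreal) \<Rightarrow> ('a \<Rightarrow> ennreal) \<Rightarrow> bool" where
  "in_space M N f \<longleftrightarrow> f \<in> borel_measurable M \<and> N f < \<infinity>"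

definition abs_cont :: "'a measure \<Rightarrow> (('a \<Rightarrow> ennreal) \<Rightarrow> ennreal) \<Rightarrow> ('a \<Rightarrow> ennreal) \<Rightarrow> bool" where
  "abs_cont M N f \<longleftrightarrow> in_space M N f \<and>
     (\<forall>E::nat \<Rightarrow> 'a set. (\<forall>k. E k \<in> sets M) \<longrightarrow>
        (AE x in M. (\<lambda>k. indicator (E k) x :: real) \<longlonglongrightarrow> 0) \<longrightarrow>
        (\<lambda>k. N (\<lambda>x. f x * indicator (E k) x)) \<longlonglongrightarrow> 0)"

definition L1Linf_norm :: "'a measure \<Rightarrow> ('a \<Rightarrow> ennreal) \<Rightarrow> ennreal" where
  "L1Linf_norm M f = rearr M f 0 + (\<integral>\<^sup>+ t \<in> {0..}. rearr M f t \<partial>lborel)"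

definition L1Linf_embeds :: "'a measure \<Rightarrow> (('a \<Rightarrow> ennreal) \<Rightarrow> ennreal) \<Rightarrow> bool" where
  "L1Linf_embeds M N \<longleftrightarrow> (\<exists>C::real. C > 0 \<and>
     (\<forall>f \<in> borel_measurable M. N f \<le> ennreal C * L1Linf_norm M f))"

definition range_int :: "'a measure \<Rightarrow> real set" where
  "range_int M = {t. 0 \<le> t \<and> ennreal t < emeasure M (space M)}"

definition measure_preserving_onto :: "'a measure \<Rightarrow> ('a \<Rightarrow> real) \<Rightarrow> bool" where
  "measure_preserving_onto M \<sigma> \<longleftrightarrow>
     \<sigma> \<in> M \<rightarrow>\<^sub>M lborel \<and> (\<forall>x \<in> space M. \<sigma> x \<in> range_int M) \<and>
     (\<forall>E \<in> sets lborel. E \<subseteq> range_int M \<longrightarrow>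
        emeasure M (\<sigma> -` E \<inter> space M) = emeasure lborel E)"

definition T_op :: "'a measure \<Rightarrow> real \<Rightarrow> (nat \<Rightarrow> 'a set) \<Rightarrow> (real \<Rightarrow> ennreal) \<Rightarrow> 'a \<Rightarrow> ennreal" where
  "T_op M \<beta> e h x =
     (if \<exists>n \<in> atom_index M \<beta>. x \<in> e n
      then (let n = (SOME n. n \<in> atom_index M \<beta> \<and> x \<in> e n) in
            ennreal (1 / \<beta>) * (\<integral>\<^sup>+ t \<in> {\<beta> * real n .. \<beta> * real (n + 1)}. rearr halfline h t \<partial>lborel))
      else 0)"

definition Xbar_from :: "'a measure \<Rightarrow> ((real \<Rightarrow> ennreal) \<Rightarrow> ennreal) \<Rightarrow> (real \<Rightarrow> ennreal) \<Rightarrow> ennreal" where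
  "Xbar_from M N0 f = N0 (\<lambda>t. rearr halfline f t * indicator (range_int M) t)"

definition is_Xbar :: "'a measure \<Rightarrow> (('a \<Rightarrow> ennreal) \<Rightarrow> ennreal) \<Rightarrow> ((real \<Rightarrow> ennreal) \<Rightarrow> ennreal) \<Rightarrow> bool" where
  "is_Xbar M N Nb \<longleftrightarrow>
     (non_atomic M \<and> (\<exists>\<sigma>. measure_preserving_onto M \<sigma> \<and>
         Nb = Xbar_from M (\<lambda>h. N (\<lambda>x. h (\<sigma> x))))) \<or>
     (\<exists>\<beta> e. atom_enum M \<beta> e \<and> Nb = Xbar_from M (\<lambda>h. N (T_op M \<beta> e h)))"

end

theory Submission
  imports Defs
begin

lemma downset_borel:
  fixes S :: "real set"
  assumes ds: "\<And>x y. y \<in> S \<Longrightarrow> x \<le> y \<Longrightarrow> x \<in> S"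
  shows "S \<in> sets borel"
proof (cases "S = UNIV")
  case True then show ?thesis by simp
next
  case False
  then obtain z where z: "z \<notin> S" by auto
  have ub: "\<And>y. y \<in> S \<Longrightarrow> y < z" using ds z by (meson not_le)
  show ?thesis
  proof (cases "S = {}")
    case True then show ?thesis by simp
  next
    case ne: False
    have bdd: "bdd_above S" using ub by (meson bdd_above.I less_imp_le)
    define a where "a = Sup S"
    have sub1: "{..<a} \<subseteq> S"
    proof
      fix x assume "x \<in> {..<a}"
      then have "x < Sup S" by (simp add: a_def)
      then obtain y where "y \<in> S" "x < y" using less_cSup_iff[OF ne bdd] by blast
      then show "x \<in> S" using ds by auto
    qed
    have sub2: "S \<subseteq> {..a}" using cSup_upper[OF _ bdd] a_def by auto
    show ?thesis
    proof (cases "a \<in> S")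
      case True
      then have "S = {..a}" using sub1 sub2 ds by (auto intro: ds)
      then show ?thesis by simp
    next
      case False
      then have "S = {..<a}" using sub1 sub2 by (auto simp: le_less)
      then show ?thesis by simp
    qed
  qed
qed

lemma antimono_borel:
  fixes g :: "real \<Rightarrow> ennreal"
  assumes "\<And>x y. x \<le> y \<Longrightarrow> g y \<le> g x"
  shows "g \<in> borel_measurable borel"
proof (rule borel_measurableI_greater)
  fix y
  have "{x. y < g x} \<in> sets borel"
    by (rule downset_borel) (use assms in \<open>auto intro: less_le_trans\<close>)
  then show "{x \<in> space borel. y < g x} \<in> sets borel" by simp
qed

lemma rearr_antimono: "t \<le> t' \<Longrightarrow> rearr M f t' \<le> rearr M f t"
  unfolding rearr_def
  by (rule Inf_superset_mono) (auto intro: order_trans ennreal_leI)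

lemma rearr_borel: "rearr M f \<in> borel_measurable borel"
  by (rule antimono_borel) (rule rearr_antimono)

lemma rearr_lborel[measurable]: "rearr M f \<in> borel_measurable lborel"
  using rearr_borel by simp

lemma rearr_lt_D:
  assumes "rearr M f t < s" "f \<in> borel_measurable M"
  shows "emeasure M {x \<in> space M. s < f x} \<le> ennreal t"
proof -
  from assms(1) obtain s' where s': "emeasure M {x \<in> space M. s' < f x} \<le> ennreal t" "s' < s"
    unfolding rearr_def by (auto simp: Inf_less_iff)
  have "emeasure M {x \<in> space M. s < f x} \<le> emeasure M {x \<in> space M. s' < f x}"
    by (rule emeasure_mono) (use s' assms(2) in \<open>auto\<close>)
  then show ?thesis using s' by simp
qed

lemma rearr_ge:
  assumes "ennreal t < emeasure M {x \<in> space M. s < f x}" "f \<in> borel_measurable M"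
  shows "s \<le> rearr M f t"
  unfolding rearr_def
proof (rule Inf_greatest)
  fix s' assume "s' \<in> {s. emeasure M {x \<in> space M. s < f x} \<le> ennreal t}"
  then have s': "emeasure M {x \<in> space M. s' < f x} \<le> ennreal t" by simp
  show "s \<le> s'"
  proof (rule ccontr)
    assume "\<not> s \<le> s'"
    then have "s' \<le> s" by simp
    then have "emeasure M {x \<in> space M. s < f x} \<le> emeasure M {x \<in> space M. s' < f x}"
      by (intro emeasure_mono) (use assms(2) in \<open>auto intro: le_less_trans\<close>)
    then show False using s' assms(1) by simp
  qed
qed

lemma rearr_le_const:
  assumes "\<And>x. x \<in> space M \<Longrightarrow> f x \<le> c"
  shows "rearr M f t \<le> c"
  unfolding rearr_def
proof (rule Inf_lower)
  have "{x \<in> space M. c < f x} = {}" using assms by (auto simp: not_less[symmetric])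
  then have "emeasure M {x \<in> space M. c < f x} = 0" by (simp only: emeasure_empty)
  then show "c \<in> {s. emeasure M {x \<in> space M. s < f x} \<le> ennreal t}" by simp
qed

lemma rearr_mono_fun:
  assumes "\<And>x. x \<in> space M \<Longrightarrow> g x \<le> f x" "g \<in> borel_measurable M" "f \<in> borel_measurable M"
  shows "rearr M g t \<le> rearr M f t"
  unfolding rearr_def
proof (rule Inf_superset_mono, safe)
  fix s assume s: "emeasure M {x \<in> space M. s < f x} \<le> ennreal t"
  have "emeasure M {x \<in> space M. s < g x} \<le> emeasure M {x \<in> space M. s < f x}"
    by (rule emeasure_mono) (use assms in \<open>auto intro: less_le_trans\<close>)
  then show "emeasure M {x \<in> space M. s < g x} \<le> ennreal t" using s by simp
qed

lemma rearr_indicator: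
  assumes "A \<in> sets M"
  shows "rearr M (indicator A) t = (if emeasure M A \<le> ennreal t then 0 else 1)"
proof -
  have A: "A \<subseteq> space M" using sets.sets_into_space[OF assms] .
  have e: "{x \<in> space M. s < (indicator A x :: ennreal)} = (if s < 1 then A else {})" for s
    using A by (auto simp: indicator_def split: if_splits)
  have S: "{s. emeasure M {x \<in> space M. s < (indicator A x :: ennreal)} \<le> ennreal t}
     = {s. 1 \<le> s} \<union> {s. s < 1 \<and> emeasure M A \<le> ennreal t}"
    by (auto simp: e not_less)
  show ?thesis
  proof (cases "emeasure M A \<le> ennreal t")
    case True
    then have "{s. emeasure M {x \<in> space M. s < (indicator A x :: ennreal)} \<le> ennreal t} = UNIV"
      unfolding S by auto
    then show ?thesis using True by (simp add: rearr_def bot_ennreal)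
  next
    case False
    then have "{s. emeasure M {x \<in> space M. s < (indicator A x :: ennreal)} \<le> ennreal t} = {1..}"
      unfolding S by auto
    then show ?thesis using False by (simp add: rearr_def)
  qed
qed


lemma qBFN_hom: "qBFN M N \<Longrightarrow> f \<in> borel_measurable M \<Longrightarrow> 0 \<le> a \<Longrightarrow>
  N (\<lambda>x. ennreal a * f x) = ennreal a * N f"
  unfolding qBFN_def by blast

lemma qBFN_zero: "qBFN M N \<Longrightarrow> f \<in> borel_measurable M \<Longrightarrow> N f = 0 \<longleftrightarrow> (AE x in M. f x = 0)"
  unfolding qBFN_def by blast

lemma qBFN_mono: "qBFN M N \<Longrightarrow> f \<in> borel_measurable M \<Longrightarrow> g \<in> borel_measurable M \<Longrightarrow>
  (AE x in M. f x \<le> g x) \<Longrightarrow> N f \<le> N g"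
  unfolding qBFN_def by blast

lemma qBFN_tri: "qBFN M N \<Longrightarrow> \<exists>C::real. C \<ge> 1 \<and> (\<forall>f \<in> borel_measurable M. \<forall>g \<in> borel_measurable M.
         N (\<lambda>x. f x + g x) \<le> ennreal C * (N f + N g))"
  unfolding qBFN_def by blast

lemma N_indicator_eq:
  assumes "ri_qBFN M N" "A \<in> sets M" "B \<in> sets M" "emeasure M A = emeasure M B"
  shows "N (indicator A) = N (indicator B)"
proof -
  have "rearrangement_invariant M N" using assms(1) by (simp add: ri_qBFN_def)
  moreover have "\<forall>t\<ge>0. rearr M (indicator A) t = rearr M (indicator B) t"
    using assms by (simp add: rearr_indicator)
  ultimately show ?thesis unfolding rearrangement_invariant_def
    using assms(2,3) by (meson borel_measurable_indicator)
qed

lemma pos_below: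
  assumes "(0::ennreal) < L"
  obtains \<eta> :: real where "0 < \<eta>" "ennreal \<eta> < L"
proof (cases "L = \<infinity>")
  case True then show ?thesis using that[of 1] by simp
next
  case False
  then obtain l where l: "L = ennreal l" "0 \<le> l" by (cases L) auto
  with assms have "0 < l" by simp
  then show ?thesis using that[of "l/2"] l by (simp add: ennreal_lessI)
qed

lemma range_int_borel: "range_int M \<in> sets borel"
proof -
  have "{t::real. ennreal t < emeasure M (space M)} \<in> sets borel"
    by (rule downset_borel) (auto intro: le_less_trans ennreal_leI)
  moreover have "range_int M = {0..} \<inter> {t::real. ennreal t < emeasure M (space M)}"
    by (auto simp: range_int_def)
  ultimately show ?thesis by auto
qed

lemma phi_atomic:
  assumes "atom_enum M \<beta> e" "A \<in> sets M" "emeasure M A \<le> ennreal (\<beta>/2)"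
  shows "A \<in> null_sets M"
proof -
  let ?I = "atom_index M \<beta>"
  have b: "0 < \<beta>" using assms(1) by (simp add: atom_enum_def)
  have null1: "A \<inter> e n \<in> null_sets M" if n: "n \<in> ?I" for n
  proof -
    have at: "atom M (e n)" and me: "emeasure M (e n) = ennreal \<beta>"
      using assms(1) n by (auto simp: atom_enum_def)
    have en: "e n \<in> sets M" using at by (simp add: atom_def)
    have AI: "A \<inter> e n \<in> sets M" using en assms(2) by auto
    have "emeasure M (A \<inter> e n) = 0 \<or> emeasure M (e n - A \<inter> e n) = 0"
      using at AI unfolding atom_def by blast
    moreover have "emeasure M (e n - A \<inter> e n) \<noteq> 0"
    proof
      assume z: "emeasure M (e n - A \<inter> e n) = 0"
      have "emeasure M (e n) = emeasure M (A \<inter> e n) + emeasure M (e n - A \<inter> e n)"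
        using AI en by (subst plus_emeasure) (auto intro: arg_cong[where f="emeasure M"])
      then have "ennreal \<beta> = emeasure M (A \<inter> e n)" using z me by simp
      also have "\<dots> \<le> emeasure M A" using assms(2) by (intro emeasure_mono) auto
      also have "\<dots> \<le> ennreal (\<beta>/2)" by (rule assms(3))
      finally show False using b by (simp add: ennreal_le_iff)
    qed
    ultimately show ?thesis using AI by auto
  qed
  have "countable ?I" by (rule countable_subset[of _ UNIV]) auto
  then have U: "(\<Union>n\<in>?I. A \<inter> e n) \<in> null_sets M" using null1 by (intro null_sets_UN') auto
  have R: "A \<inter> (space M - (\<Union>n\<in>?I. e n)) \<in> null_sets M"
    using assms(1,2) by (intro null_set_Int1) (auto simp: atom_enum_def)
  have "A = (\<Union>n\<in>?I. A \<inter> e n) \<union> (A \<inter> (space M - (\<Union>n\<in>?I. e n)))"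
    using sets.sets_into_space[OF assms(2)] by auto
  then show ?thesis using U R by (metis null_sets.Un)
qed


lemma phi_nonatomic:
  assumes ri: "ri_qBFN M N" and sig: "measure_preserving_onto M \<sigma>"
    and Nb: "Nb = Xbar_from M (\<lambda>h. N (\<lambda>x. h (\<sigma> x)))"
    and f0: "in_space halfline Nb f0" "rearr halfline f0 0 = \<infinity>"
    and eps: "0 < \<epsilon>"
  shows "\<exists>\<eta>>0. \<forall>A\<in>sets M. emeasure M A \<le> ennreal \<eta> \<longrightarrow> N (indicator A) \<le> ennreal \<epsilon>"
proof -
  have q: "qBFN M N" using ri by (simp add: ri_qBFN_def)
  have f0m: "f0 \<in> borel_measurable halfline" using f0 by (simp add: in_space_def)
  have sm: "\<sigma> \<in> M \<rightarrow>\<^sub>M lborel" and sr: "\<And>x. x \<in> space M \<Longrightarrow> \<sigma> x \<in> range_int M"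
    and sp: "\<And>E. E \<in> sets lborel \<Longrightarrow> E \<subseteq> range_int M \<Longrightarrow> emeasure M (\<sigma> -` E \<inter> space M) = emeasure lborel E"
    using sig by (auto simp: measure_preserving_onto_def)
  define h where "h t = rearr halfline f0 t * indicator (range_int M) t" for t
  have hm: "h \<in> borel_measurable lborel"
    unfolding h_def using range_int_borel[of M] by measurable
  have hsm: "(\<lambda>x. h (\<sigma> x)) \<in> borel_measurable M"
    using measurable_compose[OF sm hm] .
  have NbE: "Nb f0 = N (\<lambda>x. h (\<sigma> x))" using Nb by (simp add: Xbar_from_def h_def)
  obtain b where b: "Nb f0 = ennreal b" "0 \<le> b"
    using f0(1) by (cases "Nb f0") (auto simp: in_space_def)
  define n where "n = b / \<epsilon> + 1"
  have n1: "1 \<le> n" using b eps by (simp add: n_def)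
  let ?L = "emeasure halfline {x \<in> space halfline. ennreal n < f0 x}"
  have Lpos: "0 < ?L"
  proof (rule ccontr)
    assume "\<not> 0 < ?L"
    then have "?L = 0" by simp
    then have "rearr halfline f0 0 \<le> ennreal n"
      unfolding rearr_def by (intro Inf_lower) simp
    then show False using f0(2) by (simp add: top_unique)
  qed
  obtain \<eta> where eta: "0 < \<eta>" "ennreal \<eta> < ?L" using pos_below[OF Lpos] by blast
  have "\<forall>A\<in>sets M. emeasure M A \<le> ennreal \<eta> \<longrightarrow> N (indicator A) \<le> ennreal \<epsilon>"
  proof safe
    fix A assume A: "A \<in> sets M" "emeasure M A \<le> ennreal \<eta>"
    define a where "a = enn2real (emeasure M A)"
    have Aa: "emeasure M A = ennreal a" "0 \<le> a"
      using A(2) unfolding a_def by (auto simp: ennreal_enn2real_if top_unique)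
    have ae: "a \<le> \<eta>" using A(2) Aa eta by (simp add: ennreal_le_iff)
    define B where "B = \<sigma> -` {0..<a} \<inter> space M"
    have Bs: "B \<in> sets M" unfolding B_def using sm by measurable
    have sub: "{0..<a} \<subseteq> range_int M"
    proof
      fix t assume t: "t \<in> {0..<a}"
      then have "ennreal t < ennreal a" by (auto intro: ennreal_lessI)
      also have "\<dots> \<le> emeasure M (space M)"
        using A(1) Aa by (metis emeasure_space)
      finally show "t \<in> range_int M" using t by (simp add: range_int_def)
    qed
    have mB: "emeasure M B = emeasure M A"
      unfolding B_def using sp[OF _ sub] Aa by simp
    have NAB: "N (indicator A) = N (indicator B)"
      using N_indicator_eq[OF ri A(1) Bs] mB by simp
    have le: "ennreal n * indicator B x \<le> h (\<sigma> x)" if x: "x \<in> space M" for x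
    proof (cases "x \<in> B")
      case True
      then have sx: "\<sigma> x < a" "\<sigma> x \<in> range_int M" using sr x by (auto simp: B_def)
      have "ennreal a \<le> ennreal \<eta>" using ae by (simp add: ennreal_leI)
      then have "ennreal a < ?L" using eta(2) by (rule le_less_trans)
      then have "ennreal n \<le> rearr halfline f0 a" by (rule rearr_ge[OF _ f0m])
      also have "\<dots> \<le> rearr halfline f0 (\<sigma> x)" using sx by (intro rearr_antimono) simp
      finally show ?thesis using True sx by (simp add: h_def)
    qed simp
    have "N (\<lambda>x. ennreal n * indicator B x) \<le> N (\<lambda>x. h (\<sigma> x))"
      using Bs hsm le by (intro qBFN_mono[OF q]) (auto intro!: AE_I2)
    moreover have "N (\<lambda>x. ennreal n * indicator B x) = ennreal n * N (indicator B)"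
      using Bs n1 by (intro qBFN_hom[OF q]) auto
    ultimately have ineq: "ennreal n * N (indicator B) \<le> ennreal b" using NbE b by simp
    then have "N (indicator B) \<noteq> \<infinity>" using n1 by (auto simp: ennreal_mult_top top_unique)
    then obtain c where c: "N (indicator B) = ennreal c" "0 \<le> c" by (cases "N (indicator B)") auto
    have "n * c \<le> b" using ineq c n1 b by (simp add: ennreal_mult'[symmetric] ennreal_le_iff)
    then have "c \<le> b / n" using n1 by (simp add: field_simps)
    also have "b / n \<le> \<epsilon>" using n1 eps b by (simp add: n_def field_simps)
    finally show "N (indicator A) \<le> ennreal \<epsilon>" using NAB c by (simp add: ennreal_leI)
  qed
  then show ?thesis using eta by blast
qed


lemma phi:
  assumes ri: "ri_qBFN M N" and X: "is_Xbar M N Nb"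
    and f0: "\<exists>f0. in_space halfline Nb f0 \<and> rearr halfline f0 0 = \<infinity>"
    and eps: "0 < \<epsilon>"
  shows "\<exists>\<eta>>0. \<forall>A\<in>sets M. emeasure M A \<le> ennreal \<eta> \<longrightarrow> N (indicator A) \<le> ennreal \<epsilon>"
proof -
  have q: "qBFN M N" using ri by (simp add: ri_qBFN_def)
  from X show ?thesis unfolding is_Xbar_def
  proof (elim disjE exE conjE)
    fix \<sigma> assume "measure_preserving_onto M \<sigma>" "Nb = Xbar_from M (\<lambda>h. N (\<lambda>x. h (\<sigma> x)))"
    then show ?thesis using f0 phi_nonatomic[OF ri _ _ _ _ eps] by blast
  next
    fix \<beta> e assume ae: "atom_enum M \<beta> e"
    then have b: "0 < \<beta>" by (simp add: atom_enum_def)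
    have "N (indicator A) \<le> ennreal \<epsilon>" if A: "A \<in> sets M" "emeasure M A \<le> ennreal (\<beta>/2)" for A
    proof -
      have "A \<in> null_sets M" by (rule phi_atomic[OF ae A])
      then have "AE x in M. (indicator A x :: ennreal) = 0"
        by (rule AE_not_in[THEN eventually_mono]) simp
      then have "N (indicator A) = 0" using qBFN_zero[OF q] A by simp
      then show ?thesis by simp
    qed
    then show ?thesis using b by (intro exI[of _ "\<beta>/2"]) auto
  qed
qed

theorem mainTheorem10:
  fixes M :: "'a measure" and N :: "('a \<Rightarrow> ennreal) \<Rightarrow> ennreal"
    and Nb :: "(real \<Rightarrow> ennreal) \<Rightarrow> ennreal"
  assumes "sigma_finite_measure M"
    and "resonant M"
    and "ri_qBFN M N"
    and "is_Xbar M N Nb"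
    and "L1Linf_embeds M N"
    and "\<exists>f0. in_space halfline Nb f0 \<and> rearr halfline f0 0 = \<infinity>"
  shows "\<forall>f \<in> borel_measurable M. L1Linf_norm M f < \<infinity> \<longrightarrow> abs_cont M N f"
proof (intro ballI impI)
  fix f assume fm[measurable]: "f \<in> borel_measurable M" and fin: "L1Linf_norm M f < \<infinity>"
  have ri: "ri_qBFN M N" by fact
  have q: "qBFN M N" using ri by (simp add: ri_qBFN_def)
  obtain Ce where Ce: "0 < Ce" "\<And>g. g \<in> borel_measurable M \<Longrightarrow> N g \<le> ennreal Ce * L1Linf_norm M g"
    using assms(5) by (auto simp: L1Linf_embeds_def)
  obtain C where C: "1 \<le> C" "\<And>g h. g \<in> borel_measurable M \<Longrightarrow> h \<in> borel_measurable M \<Longrightarrow>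
      N (\<lambda>x. g x + h x) \<le> ennreal C * (N g + N h)"
    using qBFN_tri[OF q] by blast
  have phi: "\<And>\<epsilon>. 0 < \<epsilon> \<Longrightarrow> \<exists>\<eta>>0. \<forall>A\<in>sets M. emeasure M A \<le> ennreal \<eta> \<longrightarrow> N (indicator A) \<le> ennreal \<epsilon>"
    using phi[OF ri assms(4) assms(6)] by blast
  have f00: "rearr M f 0 < \<infinity>" and fint: "(\<integral>\<^sup>+ t. rearr M f t * indicator {0..} t \<partial>lborel) < \<infinity>"
    using fin by (auto simp: L1Linf_norm_def less_top[symmetric])
  have Nf: "N f < \<infinity>"
  proof -
    have "N f \<le> ennreal Ce * L1Linf_norm M f" using Ce fm by blast
    also have "\<dots> < \<infinity>" using fin by (simp add: ennreal_mult_less_top less_top)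
    finally show ?thesis .
  qed
  define K where "K = enn2real (rearr M f 0) + 1"
  have K1: "1 \<le> K" by (simp add: K_def)
  have "rearr M f 0 < ennreal K"
    using f00 unfolding K_def
    by (cases "rearr M f 0") (auto simp: ennreal_lessI)
  then have "emeasure M {x \<in> space M. ennreal K < f x} \<le> ennreal 0"
    by (rule rearr_lt_D) (rule fm)
  then have "{x \<in> space M. ennreal K < f x} \<in> null_sets M" by (auto intro: null_setsI)
  then have "AE x in M. x \<notin> {x \<in> space M. ennreal K < f x}" by (rule AE_not_in)
  then have fK: "AE x in M. f x \<le> ennreal K"
    using AE_space by eventually_elim (auto simp: not_less)
  have Ffin: "emeasure M {x \<in> space M. ennreal \<delta> < f x} < \<infinity>" if d: "0 < \<delta>" for \<delta> :: real
  proof -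
    have "\<exists>t\<ge>0. rearr M f t < ennreal \<delta>"
    proof (rule ccontr)
      assume "\<not> (\<exists>t\<ge>0. rearr M f t < ennreal \<delta>)"
      then have ge: "\<And>t. 0 \<le> t \<Longrightarrow> ennreal \<delta> \<le> rearr M f t" by (auto simp: not_less)
      obtain I where I: "(\<integral>\<^sup>+ t. rearr M f t * indicator {0..} t \<partial>lborel) = ennreal I" "0 \<le> I"
        using fint by (cases "(\<integral>\<^sup>+ t. rearr M f t * indicator {0..} t \<partial>lborel)") auto
      define T where "T = I / \<delta> + 1"
      have T0: "0 \<le> T" using I d by (simp add: T_def)
      have "(\<integral>\<^sup>+ t. ennreal \<delta> * indicator {0..T} t \<partial>lborel) \<le> (\<integral>\<^sup>+ t. rearr M f t * indicator {0..} t \<partial>lborel)"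
        by (intro nn_integral_mono) (auto simp: indicator_def ge)
      moreover have "(\<integral>\<^sup>+ t. ennreal \<delta> * indicator {0..T} t \<partial>lborel) = ennreal (\<delta> * T)"
        using T0 d by (simp add: nn_integral_cmult_indicator ennreal_mult)
      ultimately have "\<delta> * T \<le> I" using I by (simp add: ennreal_le_iff)
      moreover have "\<delta> * T = I + \<delta>" using d by (simp add: T_def field_simps)
      ultimately show False using d by simp
    qed
    then obtain t where t: "0 \<le> t" "rearr M f t < ennreal \<delta>" by blast
    have "emeasure M {x \<in> space M. ennreal \<delta> < f x} \<le> ennreal t"
      by (rule rearr_lt_D[OF t(2) fm])
    also have "\<dots> < \<infinity>" by simp
    finally show ?thesis .
  qed
  define D where "D \<delta> = ennreal \<delta> + (\<integral>\<^sup>+ t. min (rearr M f t) (ennreal \<delta>) * indicator {0..} t \<partial>lborel)" for \<delta> :: real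
  have small: "N (\<lambda>x. f x * indicator (E - {x \<in> space M. ennreal \<delta> < f x}) x) \<le> ennreal Ce * D \<delta>"
    if d: "0 < \<delta>" and E: "E \<in> sets M" for \<delta> E
  proof -
    define g where "g x = f x * indicator (E - {x \<in> space M. ennreal \<delta> < f x}) x" for x
    have gm: "g \<in> borel_measurable M" unfolding g_def using E by measurable
    have g1: "g x \<le> f x" for x by (simp add: g_def indicator_def)
    have g2: "g x \<le> ennreal \<delta>" if "x \<in> space M" for x
      using that by (auto simp: g_def indicator_def not_less)
    have r: "rearr M g t \<le> min (rearr M f t) (ennreal \<delta>)" for t
      using rearr_mono_fun[OF _ gm fm, of t] g1 rearr_le_const[of M g "ennreal \<delta>" t] g2 by simp
    have "L1Linf_norm M g \<le> D \<delta>"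
      unfolding L1Linf_norm_def D_def
    proof (rule add_mono)
      show "rearr M g 0 \<le> ennreal \<delta>" using r[of 0] by simp
      show "(\<integral>\<^sup>+ t. rearr M g t * indicator {0..} t \<partial>lborel)
          \<le> (\<integral>\<^sup>+ t. min (rearr M f t) (ennreal \<delta>) * indicator {0..} t \<partial>lborel)"
        by (intro nn_integral_mono mult_right_mono r) simp
    qed
    then have "N g \<le> ennreal Ce * D \<delta>" using Ce(2)[OF gm] by (meson mult_left_mono order_trans zero_le)
    then show ?thesis by (simp add: g_def[abs_def])
  qed
  have Dlim: "\<exists>\<delta>>0. D \<delta> < v" if v: "0 < v" for v
  proof -
    define u where "u i t = min (rearr M f t) (ennreal (inverse (real (Suc i)))) * indicator {0..} t" for i t
    have i0: "(\<lambda>i. ennreal (inverse (real (Suc i)))) \<longlonglongrightarrow> 0"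
      using LIMSEQ_inverse_real_of_nat by (simp add: ennreal_tendsto_0_iff)
    have p1: "\<And>i. u i \<in> borel_measurable lborel" unfolding u_def by measurable
    have p2: "(\<lambda>t. 0::ennreal) \<in> borel_measurable lborel" by simp
    have p3: "(\<lambda>t. rearr M f t * indicator {0..} t) \<in> borel_measurable lborel" by measurable
    have p4: "\<And>j. AE t in lborel. u j t \<le> rearr M f t * indicator {0..} t"
      by (intro AE_I2) (auto simp: u_def indicator_def)
    have p6: "AE t in lborel. (\<lambda>i. u i t) \<longlonglongrightarrow> 0"
    proof (intro AE_I2 tendsto_sandwich[OF _ _ tendsto_const i0])
      fix t
      show "\<forall>\<^sub>F i in sequentially. 0 \<le> u i t" by simp
      show "\<forall>\<^sub>F i in sequentially. u i t \<le> ennreal (inverse (real (Suc i)))"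
        by (intro always_eventually allI) (auto simp: u_def indicator_def)
    qed
    have "(\<lambda>i. (\<integral>\<^sup>+ t. u i t \<partial>lborel)) \<longlonglongrightarrow> (\<integral>\<^sup>+ t. 0 \<partial>lborel)"
      using nn_integral_dominated_convergence[OF p1 p2 p3 p4 fint p6] by simp
    then have "(\<lambda>i. D (inverse (real (Suc i)))) \<longlonglongrightarrow> 0 + 0"
      unfolding D_def u_def by (intro tendsto_add i0) simp
    then have "\<forall>\<^sub>F i in sequentially. D (inverse (real (Suc i))) < v"
      using v by (simp add: order_tendsto_iff)
    then obtain i where "D (inverse (real (Suc i))) < v" by (auto simp: eventually_sequentially)
    then show ?thesis by (intro exI[of _ "inverse (real (Suc i))"]) simp
  qed
  show "abs_cont M N f"
    unfolding abs_cont_def in_space_def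
  proof (intro conjI fm Nf allI impI)
    fix E :: "nat \<Rightarrow> 'a set"
    assume Em: "\<forall>k. E k \<in> sets M" and Ec: "AE x in M. (\<lambda>k. indicator (E k) x :: real) \<longlonglongrightarrow> 0"
    have Em': "\<And>k. E k \<in> sets M" using Em by blast
    show "(\<lambda>k. N (\<lambda>x. f x * indicator (E k) x)) \<longlonglongrightarrow> 0"
      unfolding order_tendsto_iff
    proof (intro conjI allI impI)
      fix l :: ennreal assume "l < 0" then show "\<forall>\<^sub>F k in sequentially. l < N (\<lambda>x. f x * indicator (E k) x)"
        by simp
    next
      fix v :: ennreal assume v: "0 < v"
      obtain e where e: "0 < e" "ennreal e < v" using pos_below[OF v] by blast
      define e1 where "e1 = e / (2 * C)"
      have e1: "0 < e1" using e C by (simp add: e1_def)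
      obtain \<delta> where d: "0 < \<delta>" "D \<delta> < ennreal (e1 / Ce)"
        using Dlim[of "ennreal (e1 / Ce)"] e1 Ce by auto
      obtain \<eta> where eta: "0 < \<eta>" "\<And>A. A \<in> sets M \<Longrightarrow> emeasure M A \<le> ennreal \<eta> \<Longrightarrow> N (indicator A) \<le> ennreal (e1 / K)"
        using phi[of "e1 / K"] e1 K1 by auto
      define F where "F = {x \<in> space M. ennreal \<delta> < f x}"
      have Fm: "F \<in> sets M" unfolding F_def by measurable
      have mF: "emeasure M F < \<infinity>" unfolding F_def using Ffin[OF d(1)] .
      have EF: "\<And>k. E k \<inter> F \<in> sets M" using Em' Fm by auto
      have q1: "\<And>i. indicator (E i \<inter> F) \<in> borel_measurable M" using EF by simp
      have q2: "(\<lambda>x. 0::ennreal) \<in> borel_measurable M" by simp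
      have q3: "indicator F \<in> borel_measurable M" using Fm by simp
      have q4: "\<And>j. AE x in M. (indicator (E j \<inter> F) x :: ennreal) \<le> indicator F x"
        by (intro AE_I2) (auto simp: indicator_def)
      have q5: "(\<integral>\<^sup>+ x. indicator F x \<partial>M) < \<infinity>" using Fm mF by simp
      have q6: "AE x in M. (\<lambda>k. indicator (E k \<inter> F) x :: ennreal) \<longlonglongrightarrow> 0"
        using Ec
      proof eventually_elim
        case (elim x)
        have "\<forall>\<^sub>F k in sequentially. (indicator (E k) x :: real) < 1/2"
          by (rule order_tendstoD(2)[OF elim]) simp
        then have "\<forall>\<^sub>F k in sequentially. (indicator (E k \<inter> F) x :: ennreal) = 0"
          by (rule eventually_mono) (auto simp: indicator_def split: if_splits)
        then show ?case by (rule tendsto_eventually)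
      qed
      have "(\<lambda>k. (\<integral>\<^sup>+ x. indicator (E k \<inter> F) x \<partial>M)) \<longlonglongrightarrow> (\<integral>\<^sup>+ x. 0 \<partial>M)"
        using nn_integral_dominated_convergence[OF q1 q2 q3 q4 q5 q6] by simp
      then have "(\<lambda>k. emeasure M (E k \<inter> F)) \<longlonglongrightarrow> 0" using EF by simp
      then have ev: "\<forall>\<^sub>F k in sequentially. emeasure M (E k \<inter> F) < ennreal \<eta>"
        using eta(1) by (simp add: order_tendsto_iff)
      show "\<forall>\<^sub>F k in sequentially. N (\<lambda>x. f x * indicator (E k) x) < v"
        using ev
      proof (rule eventually_mono)
        fix k assume k: "emeasure M (E k \<inter> F) < ennreal \<eta>"
        define a where "a x = f x * indicator (E k \<inter> F) x" for x
        define b where "b x = f x * indicator (E k - F) x" for x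
        have am: "a \<in> borel_measurable M" unfolding a_def using EF by measurable
        have bm: "b \<in> borel_measurable M" unfolding b_def using Em' Fm by measurable
        have eq: "(\<lambda>x. f x * indicator (E k) x) = (\<lambda>x. a x + b x)"
          by (auto simp: a_def b_def indicator_def fun_eq_iff)
        have Km: "(\<lambda>x. ennreal K * indicator (E k \<inter> F) x) \<in> borel_measurable M" using EF by measurable
        have "N a \<le> N (\<lambda>x. ennreal K * indicator (E k \<inter> F) x)"
          using fK
        proof (intro qBFN_mono[OF q am Km], eventually_elim)
          case (elim x) then show ?case by (auto simp: a_def indicator_def)
        qed
        also have "\<dots> = ennreal K * N (indicator (E k \<inter> F))"
          using EF K1 by (intro qBFN_hom[OF q]) auto
        also have "\<dots> \<le> ennreal K * ennreal (e1 / K)"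
          using eta(2)[OF EF] k by (intro mult_left_mono) auto
        also have "\<dots> = ennreal e1" using K1 e1 by (simp add: ennreal_mult[symmetric])
        finally have Na: "N a \<le> ennreal e1" .
        have "N b \<le> ennreal Ce * D \<delta>" unfolding b_def F_def by (rule small[OF d(1) Em'])
        also have "\<dots> \<le> ennreal Ce * ennreal (e1 / Ce)" using d(2) by (intro mult_left_mono) auto
        also have "\<dots> = ennreal e1" using Ce e1 by (simp add: ennreal_mult[symmetric])
        finally have Nb': "N b \<le> ennreal e1" .
        have "N (\<lambda>x. f x * indicator (E k) x) \<le> ennreal C * (N a + N b)"
          unfolding eq by (rule C(2)[OF am bm])
        also have "\<dots> \<le> ennreal C * (ennreal e1 + ennreal e1)"
          using Na Nb' by (intro mult_left_mono add_mono) auto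
        also have "\<dots> = ennreal e"
          using C e1 by (simp add: ennreal_plus[symmetric] ennreal_mult[symmetric] e1_def field_simps del: ennreal_plus)
        finally show "N (\<lambda>x. f x * indicator (E k) x) < v" using e(2) by (rule le_less_trans)
      qed
    qed
  qed
qed

end
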